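(* Let $\mathbf{x}\in\mathbb{R}^d$ and consider the training set $\{(\mathbf{x},1),(-\mathbf{x},-1)\}$ classified by the minimum norm interpolant $g_K$ of the CNTK-GAP kernel $K$ (patch size $q$, $1\le q\le d$), assuming the Gram matrix $H_K$ on $\{\mathbf{x},-\mathbf{x}\}$ is invertible. Then the resulting linear classifier has separating hyperplane $\mathbf{z}^T\mathbf{1}_d=0$, and its margin on the training set equals the difference between the DC components of the two training points, $|f_{dc}(\mathbf{x})-f_{dc}(-\mathbf{x})|$.
   Context: $f_{dc}(\mathbf{x})=\frac{1}{\sqrt d}\sum_{i=1}^d x_i$. The margin of a hyperplane through the origin with unit normal $\mathbf{w}$ separating a point $\mathbf{a}$ (low side) from $\mathbf{b}$ (high side) is $\mathbf{w}^T\mathbf{b}-\mathbf{w}^T\mathbf{a}$. FC-NTK on $\mathbb{R}^q$: $k(\mathbf{u},\mathbf{v})=\frac{1}{\pi}\left(2\mathbf{u}^T\mathbf{v}(\pi-\phi)+\|\mathbf{u}\|\|\mathbf{v}\|\sin\phi\right)$ with $\phi$ the angle between $\mathbf{u},\mathbf{v}$ ($k=0$ if an argument is $0$). CNTK-GAP: $K(\mathbf{z},\mathbf{x})=\frac{1}{d^2}\sum_{i,j=1}^d k(\bar{\mathbf{z}}_i,\bar{\mathbf{x}}_j)$ where $\bar{\mathbf{z}}_i=(z_i,z_{i+1},\dots,z_{i+q-1})^T$ with indices cyclic mod $d$. Minimum norm interpolant: $g_K(\mathbf{z})=(K(\mathbf{z},\mathbf{x}),K(\mathbf{z},-\mathbf{x}))H_K^{-1}(1,-1)^T$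 with $H_K$ the $2\times2$ Gram matrix of $K$ on $(\mathbf{x},-\mathbf{x})$. $\mathbf{1}_d$ is the all-ones vector. *)

theory Defs
  imports "HOL-Analysis.Analysis"
begin

text \<open>Vectors of R^m are represented as functions nat \<Rightarrow> real; only the
entries with index < m matter.\<close>

definition ip :: "nat \<Rightarrow> (nat \<Rightarrow> real) \<Rightarrow> (nat \<Rightarrow> real) \<Rightarrow> real" where
  "ip m u v = (\<Sum>i<m. u i * v i)"

definition vnorm :: "nat \<Rightarrow> (nat \<Rightarrow> real) \<Rightarrow> real" where
  "vnorm m u = sqrt (ip m u u)"

definition fc_ntk :: "nat \<Rightarrow> (nat \<Rightarrow> real) \<Rightarrow> (nat \<Rightarrow> real) \<Rightarrow> real" where
  "fc_ntk q u v =
     (if vnorm q u = 0 \<or> vnorm q v = 0 then 0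
      else (let \<phi> = arccos (ip q u v / (vnorm q u * vnorm q v)) in
        (1 / pi) * (2 * ip q u v * (pi - \<phi>) + vnorm q u * vnorm q v * sin \<phi>)))"

definition patch :: "nat \<Rightarrow> nat \<Rightarrow> (nat \<Rightarrow> real) \<Rightarrow> nat \<Rightarrow> (nat \<Rightarrow> real)" where
  "patch d q z i = (\<lambda>k. z ((i + k) mod d))"

definition cntk_gap :: "nat \<Rightarrow> nat \<Rightarrow> (nat \<Rightarrow> real) \<Rightarrow> (nat \<Rightarrow> real) \<Rightarrow> real" where
  "cntk_gap d q z x =
     (1 / real d ^ 2) * (\<Sum>i<d. \<Sum>j<d. fc_ntk q (patch d q z i) (patch d q x j))"

definition gram :: "nat \<Rightarrow> nat \<Rightarrow> (nat \<Rightarrow> real) \<Rightarrow> real^2^2" where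
  "gram d q x = vector [vector [cntk_gap d q x x, cntk_gap d q x (-x)],
                        vector [cntk_gap d q (-x) x, cntk_gap d q (-x) (-x)]]"

definition g_K :: "nat \<Rightarrow> nat \<Rightarrow> (nat \<Rightarrow> real) \<Rightarrow> (nat \<Rightarrow> real) \<Rightarrow> real" where
  "g_K d q x z =
     ((vector [cntk_gap d q z x, cntk_gap d q z (-x)] :: real^2) v* matrix_inv (gram d q x))
       \<bullet> (vector [1, -1] :: real^2)"

definition f_dc :: "nat \<Rightarrow> (nat \<Rightarrow> real) \<Rightarrow> real" where
  "f_dc d x = (1 / sqrt (real d)) * (\<Sum>i<d. x i)"

text \<open>Margin of hyperplane through origin with normal w, a on low side, b on high side.\<close>
definition margin :: "nat \<Rightarrow> (nat \<Rightarrow> real) \<Rightarrow> (nat \<Rightarrow> real) \<Rightarrow> (nat \<Rightarrow> real) \<Rightarrow> real" where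
  "margin d w a b = ip d w b - ip d w a"

end

theory Submission imports Defs begin

lemma ip_neg2[simp]: "ip m u (-v) = - ip m u v" "ip m (-u) v = - ip m u v"
  by (simp_all add: ip_def sum_negf)
lemma vnorm_neg[simp]: "vnorm m (-u) = vnorm m u"
  by (simp add: vnorm_def ip_def)

lemma ip_cs: "\<bar>ip m u v\<bar> \<le> vnorm m u * vnorm m v"
proof -
  have "(ip m u v)^2 \<le> ip m u u * ip m v v"
    using Cauchy_Schwarz_ineq_sum[of u v "{..<m}"] by (simp add: ip_def power2_eq_square)
  moreover have "ip m u u \<ge> 0" "ip m v v \<ge> 0" by (auto simp: ip_def intro: sum_nonneg)
  ultimately show ?thesis unfolding vnorm_def
    by (metis real_sqrt_abs real_sqrt_le_mono real_sqrt_mult)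
qed

lemma fc_neg_neg: "fc_ntk q (-u) (-v) = fc_ntk q u v"
  by (simp add: fc_ntk_def)

lemma fc_diff: "fc_ntk q u v - fc_ntk q u (-v) = 2 * ip q u v"
proof (cases "vnorm q u = 0 \<or> vnorm q v = 0")
  case True
  then have "ip q u v = 0" using ip_cs[of q u v] by auto
  then show ?thesis using True by (simp add: fc_ntk_def)
next
  case False
  define t where "t = ip q u v / (vnorm q u * vnorm q v)"
  have "ip q u u \<ge> 0" "ip q v v \<ge> 0" by (auto simp: ip_def intro: sum_nonneg)
  then have pos: "vnorm q u * vnorm q v > 0" using False by (simp add: vnorm_def)
  have "\<bar>t\<bar> = \<bar>ip q u v\<bar> / \<bar>vnorm q u * vnorm q v\<bar>" unfolding t_def by (rule abs_divide)
  also have "\<dots> = \<bar>ip q u v\<bar> / (vnorm q u * vnorm q v)" using pos by simp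
  also have "\<dots> \<le> 1" using ip_cs[of q u v] pos by (simp only: pos_divide_le_eq mult_1)
  finally have "\<bar>t\<bar> \<le> 1" .
  then have ac: "arccos (-t) = pi - arccos t" by (intro arccos_minus) auto
  have "ip q u (-v) / (vnorm q u * vnorm q (-v)) = -t" by (simp add: t_def)
  define ph where "ph = arccos t"
  define A where "A = vnorm q u"
  define B where "B = vnorm q v"
  define p where "p = ip q u v"
  have e1: "fc_ntk q u v = (1/pi) * (2*p*(pi-ph) + A * B * sin ph)"
    using False unfolding fc_ntk_def Let_def t_def ph_def A_def B_def p_def by simp
  have "fc_ntk q u (-v) = (1/pi) * (2*(-p)*(pi - arccos (-t)) + A * B * sin (arccos (-t)))"
    using False \<open>ip q u (-v) / (vnorm q u * vnorm q (-v)) = -t\<close>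
    unfolding fc_ntk_def Let_def A_def B_def p_def by simp
  also have "\<dots> = (1/pi) * (2*(-p)*ph + A * B * sin ph)"
    unfolding ac ph_def by simp
  finally have e2: "fc_ntk q u (-v) = (1/pi) * (2*(-p)*ph + A * B * sin ph)" .
  have "fc_ntk q u v - fc_ntk q u (-v) = (1/pi) * (2*p*pi)"
    unfolding e1 e2 by (simp add: algebra_simps)
  also have "\<dots> = 2 * p" by simp
  finally show ?thesis unfolding p_def .
qed

lemma sum_rot: fixes d k :: nat assumes "0 < d" shows "(\<Sum>i<d. f ((i + k) mod d)) = (\<Sum>i<d. (f i :: real))"
proof -
  have "bij_betw (\<lambda>i. (i + k) mod d) {..<d} {..<d}"
  proof (rule bij_betw_imageI)
    show "inj_on (\<lambda>i. (i + k) mod d) {..<d}"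
    proof (rule inj_onI)
      fix i j :: nat assume "i \<in> {..<d}" "j \<in> {..<d}" "(i + k) mod d = (j + k) mod d"
      then have "d dvd nat \<bar>int (i + k) - int (j + k)\<bar>" using mod_eq_iff_dvd_symdiff_nat by blast
      then have "d dvd nat \<bar>int i - int j\<bar>" by simp
      then have "i mod d = j mod d" using mod_eq_iff_dvd_symdiff_nat by blast
      then show "i = j" using \<open>i \<in> {..<d}\<close> \<open>j \<in> {..<d}\<close> by simp
    qed
    hence "card ((\<lambda>i. (i + k) mod d) ` {..<d}) = d" by (simp add: card_image)
    moreover have "(\<lambda>i. (i + k) mod d) ` {..<d} \<subseteq> {..<d}" using assms by auto
    ultimately show "(\<lambda>i. (i + k) mod d) ` {..<d} = {..<d}"
      by (metis card_lessThan card_subset_eq finite_lessThan)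
  qed
  then show ?thesis by (rule sum.reindex_bij_betw)
qed

lemma cntk_diff: assumes "0 < d"
  shows "cntk_gap d q z x - cntk_gap d q z (-x) = 2 * q * (\<Sum>i<d. z i) * (\<Sum>i<d. x i) / real d ^ 2"
proof -
  have e: "(\<lambda>a. - x a) = - x" by auto
  have pn: "patch d q (-x) j = - patch d q x j" for j by (simp add: patch_def fun_eq_iff)
  have "cntk_gap d q z x - cntk_gap d q z (-x) =
     (1 / real d ^ 2) * (\<Sum>i<d. \<Sum>j<d. 2 * ip q (patch d q z i) (patch d q x j))"
    unfolding cntk_gap_def pn by (simp add: fc_diff[symmetric] sum_subtractf right_diff_distrib)
  also have "(\<Sum>i<d. \<Sum>j<d. 2 * ip q (patch d q z i) (patch d q x j))
     = 2 * (\<Sum>k<q. (\<Sum>i<d. z ((i + k) mod d)) * (\<Sum>j<d. x ((j + k) mod d)))"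
    by (simp add: ip_def patch_def sum_distrib_left sum_distrib_right sum.swap[of _ "{..<q}"] mult_ac)
  also have "\<dots> = 2 * q * (\<Sum>i<d. z i) * (\<Sum>i<d. x i)"
    by (simp add: sum_rot[OF assms])
  finally show ?thesis by (simp only: e) (simp add: field_simps)
qed

lemma patch_neg: "patch d q (-x) j = - patch d q x j" by (simp add: patch_def fun_eq_iff)

lemma cntk_neg: "cntk_gap d q (-z) (-x) = cntk_gap d q z x"
  by (simp add: cntk_gap_def patch_neg fc_neg_neg)

lemma inv_mult: assumes "invertible (A::real^'n^'m)" shows "matrix_inv A ** A = mat 1"
  using someI_ex[OF assms[unfolded invertible_def]] unfolding matrix_inv_def by blast

theorem corollary2:
  fixes d q :: nat and x :: "nat \<Rightarrow> real"
  assumes "1 \<le> q" and "q \<le> d"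
    and "invertible (gram d q x)"
  shows "\<exists>w c. vnorm d w = 1 \<and> (\<forall>i<d. w i = w 0) \<and> c > 0
           \<and> (\<forall>z. g_K d q x z = c * ip d w z)
           \<and> margin d w (-x) x = \<bar>f_dc d x - f_dc d (-x)\<bar>"
proof -
  have d0: "0 < d" using assms by simp
  have q0: "0 < q" using assms by simp
  define S where "S = (\<lambda>z::nat\<Rightarrow>real. \<Sum>i<d. z i)"
  define a where "a = cntk_gap d q x x"
  define b where "b = cntk_gap d q x (-x)"
  have mm: "- (- x) = x" by (rule ext) simp
  have b2: "cntk_gap d q (-x) x = b" unfolding b_def using cntk_neg[of d q "-x" x] mm by simp
  have a2: "cntk_gap d q (-x) (-x) = a" unfolding a_def by (rule cntk_neg)
  have H: "gram d q x = vector [vector [a, b], vector [b, a]]"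
    unfolding gram_def a2 b2 a_def b_def ..
  have "det (gram d q x) \<noteq> 0" using assms(3) invertible_det_nz by blast
  then have "a * a - b * b \<noteq> 0" unfolding H by (simp add: det_2)
  moreover have "a * a - b * b = (a - b) * (a + b)" by (simp add: algebra_simps)
  ultimately have ab: "a - b \<noteq> 0" by auto
  have cd: "cntk_gap d q z x - cntk_gap d q z (-x) = 2 * real q * S z * S x / real d ^ 2" for z
    unfolding S_def by (rule cntk_diff[OF d0])
  have abS: "a - b = 2 * real q * S x * S x / real d ^ 2"
    unfolding a_def b_def by (rule cd)
  have Sx: "S x \<noteq> 0" using ab abS by auto
  define u :: "real^2" where "u = vector [1 / (a - b), - 1 / (a - b)]"
  have Hu: "gram d q x *v u = vector [1, -1]"
    using ab unfolding H u_def
    by (simp add: vec_eq_iff forall_2 matrix_vector_mult_def sum_2 divide_simps)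
  have Minv: "matrix_inv (gram d q x) *v vector [1, -1] = u"
    unfolding Hu[symmetric] matrix_vector_mul_assoc inv_mult[OF assms(3)] by simp
  have g: "g_K d q x z = S z / S x" for z
  proof -
    have "g_K d q x z = (cntk_gap d q z x - cntk_gap d q z (-x)) / (a - b)"
      unfolding g_K_def dot_lmul_matrix Minv u_def
      by (simp add: inner_vec_def sum_2 diff_divide_distrib)
    also have "\<dots> = (2 * real q * S z * S x / real d ^ 2) / (2 * real q * S x * S x / real d ^ 2)"
      unfolding cd abS ..
    also have "\<dots> = S z / S x" using Sx q0 d0 by (simp add: divide_simps)
    finally show ?thesis .
  qed
  define w where "w = (\<lambda>i::nat. sgn (S x) / sqrt d)"
  define c where "c = sqrt d / \<bar>S x\<bar>"
  have ipw: "ip d w z = sgn (S x) * S z / sqrt d" for z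
    unfolding ip_def w_def S_def by (simp add: sum_distrib_left sum_divide_distrib)
  have sq: "sgn (S x) * sgn (S x) = 1" using Sx by (simp add: sgn_if)
  show ?thesis
  proof (intro exI conjI allI impI)
    have Sw: "S w = real d * sgn (S x) / sqrt d" by (simp add: S_def w_def)
    have "ip d w w = (sgn (S x) * sgn (S x)) * (real d / (sqrt d * sqrt d))"
      unfolding ipw Sw by (simp add: field_simps)
    also have "\<dots> = 1" using sq d0 by simp
    finally have "ip d w w = 1" .
    then show "vnorm d w = 1" unfolding vnorm_def by simp
    show "w i = w 0" for i by (simp add: w_def)
    show "c > 0" unfolding c_def using Sx d0 by simp
    show "g_K d q x z = c * ip d w z" for z
      unfolding g ipw c_def using Sx d0 by (simp add: sgn_if)
    have "S (-x) = - S x" unfolding S_def by (simp add: sum_negf)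
    moreover have "f_dc d x = S x / sqrt d" "f_dc d (-x) = - S x / sqrt d"
      by (simp_all add: f_dc_def S_def sum_negf)
    ultimately show "margin d w (-x) x = \<bar>f_dc d x - f_dc d (-x)\<bar>"
      unfolding margin_def ipw using Sx d0
      by (auto simp add: sgn_if abs_if divide_less_0_iff)
  qed
qed

end
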